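(* Let $n_0,L\in\mathbb{N}_+$, $n_1,\dots,n_L\in\mathbb{N}_+$, $h_l\in\mathrm{RL}(n_{l-1},n_l)$ for $l=1,\dots,L$, $\mathbf{h}=(h_1,\dots,h_L)$, and $\gamma\in\Gamma$. Then $\tilde{\mathcal{H}}^{(1)}(\mathcal{S}^{(1)}_{\mathbf{h}})\preceq\varphi^{(\gamma)}_{n_1}({\rm e}_{n_0})$.
   Context: $\sigma(x)=\max(0,x)$; $\mathrm{RL}(n,n')$ ($n,n'\in\mathbb{N}_+$) is the set of maps $h:\mathbb{R}^n\to\mathbb{R}^{n'}$, $h(x)_i=\sigma(\langle x,w_i\rangle+b_i)$ for some $W\in\mathbb{R}^{n'\times n}$ with rows $w_i$, $b\in\mathbb{R}^{n'}$; convention: $\mathrm{RL}(0,n')$ are constant maps $\{0\}\to\mathbb{R}^{n'}$ with $\mathcal{H}_{n'}(\mathcal{S}_h)={\rm e}_0$. Signature $S_h(x)_i=1$ iff $\langle x,w_i\rangle+b_i>0$ else $0$; $\mathcal{S}_h=\{S_h(x)\}$; $|s|=\sum_i s_i$. Multi signature $S_{\mathbf{h}}(x)=(S_{h_1}(x),S_{h_2}(h_1(x)),\dots,S_{h_L}(h_{L-1}\circ\cdots\circ h_1(x)))$, $\mathcal{S}_{\mathbf{h}}=\{S_{\mathbf{h}}(x):x\in\mathbb{R}^{n_0}\}$, and for $l\le L$, $\mathcal{S}^{(l)}_{\mathbf{h}}=\{(s_1,\dots,s_l):(s_1,\dots,s_L)\in\mathcal{S}_{\mathbf{h}}\}$.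 $V$: sequences $(v_j)_{j\in\mathbb{N}}$ of nonnegative integers with finite sum; ${\rm e}_i$ has $({\rm e}_i)_j=\delta_{ij}$; $v\preceq w$ iff $\sum_{j\ge J}v_j\le\sum_{j\ge J}w_j$ for all $J\in\mathbb{N}$; for finite families $\max_i(v^{(i)})_J=\max_i\sum_{j\ge J}v^{(i)}_j-\max_i\sum_{j\ge J+1}v^{(i)}_j$. Activation histogram $\mathcal{H}_{n'}(\mathcal{S})=(|\{s\in\mathcal{S}:|s|=j\}|)_j$. Dimension histogram: for $U\subseteq\{0,1\}^{n_1}\times\dots\times\{0,1\}^{n_l}$, $\tilde{\mathcal{H}}^{(l)}(U)=(|\{(s_1,\dots,s_l)\in U:\min(n_0,|s_1|,\dots,|s_l|)=j\}|)_{j\in\mathbb{N}}$. $\Gamma$: families $(\gamma_{n,n'})_{n'\in\mathbb{N}_+,n\in\{0,\dots,n'\}}$ in $V$ with (i) $\max\{\mathcal{H}_{n'}(\mathcal{S}_h):h\in\mathrm{RL}(n,n')\}\preceq\gamma_{n,n'}$, (ii) $n\le\tilde n\le n'\Rightarrow\gamma_{n,n'}\preceq\gamma_{\tilde n,n'}$. $\mathrm{cl}_{i^*}(v)_i=v_i$ for $i<i^*$, $\sum_{j\ge i^*}v_j$ for $i=i^*$, $0$ for $i>i^*$. $\varphi^{(\gamma)}_{n'}(v)=\sum_{n=0}^\infty v_n\,\mathrm{cl}_{\min(n,n')}(\gamma_{\min(n,n'),n'})$. *)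

theory Defs
  imports Complex_Main
begin

(* Elements of V: sequences nat => nat (finite support assumed where needed). *)
definition fin_supp :: "(nat \<Rightarrow> nat) \<Rightarrow> bool" where
  "fin_supp v \<longleftrightarrow> finite {j. v j \<noteq> 0}"

definition tailsum :: "(nat \<Rightarrow> nat) \<Rightarrow> nat \<Rightarrow> nat" where
  "tailsum v J = sum v {j. J \<le> j \<and> v j \<noteq> 0}"

definition vle :: "(nat \<Rightarrow> nat) \<Rightarrow> (nat \<Rightarrow> nat) \<Rightarrow> bool" where
  "vle v w \<longleftrightarrow> (\<forall>J. tailsum v J \<le> tailsum w J)"

definition ev :: "nat \<Rightarrow> nat \<Rightarrow> nat" where
  "ev i = (\<lambda>j. if j = i then 1 else 0)"

(* max of a finite family A of elements of V *)
definition vmax :: "(nat \<Rightarrow> nat) set \<Rightarrow> nat \<Rightarrow> nat" where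
  "vmax A J = Max ((\<lambda>v. tailsum v J) ` A) - Max ((\<lambda>v. tailsum v (Suc J)) ` A)"

(* signatures in {0,1}^n are bool lists of length n; |s| *)
definition wt :: "bool list \<Rightarrow> nat" where
  "wt s = length (filter id s)"

(* a ReLU layer in RL(n,n') given by weights W (rows w_i = W i) and bias b;
   x \<in> R^n represented by nat => real, only coordinates < n used *)
definition pre :: "nat \<Rightarrow> (nat \<Rightarrow> nat \<Rightarrow> real) \<Rightarrow> (nat \<Rightarrow> real) \<Rightarrow> (nat \<Rightarrow> real) \<Rightarrow> nat \<Rightarrow> real" where
  "pre n W b x i = (\<Sum>k<n. x k * W i k) + b i"

definition layer_out :: "nat \<Rightarrow> nat \<Rightarrow> (nat \<Rightarrow> nat \<Rightarrow> real) \<Rightarrow> (nat \<Rightarrow> real) \<Rightarrow> (nat \<Rightarrow> real) \<Rightarrow> (nat \<Rightarrow> real)" where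
  "layer_out n n' W b x = (\<lambda>i. if i < n' then max 0 (pre n W b x i) else 0)"

definition layer_sig :: "nat \<Rightarrow> nat \<Rightarrow> (nat \<Rightarrow> nat \<Rightarrow> real) \<Rightarrow> (nat \<Rightarrow> real) \<Rightarrow> (nat \<Rightarrow> real) \<Rightarrow> bool list" where
  "layer_sig n n' W b x = map (\<lambda>i. 0 < pre n W b x i) [0..<n']"

definition sigset :: "nat \<Rightarrow> nat \<Rightarrow> (nat \<Rightarrow> nat \<Rightarrow> real) \<Rightarrow> (nat \<Rightarrow> real) \<Rightarrow> bool list set" where
  "sigset n n' W b = {layer_sig n n' W b x | x. True}"

definition act_hist :: "bool list set \<Rightarrow> nat \<Rightarrow> nat" where
  "act_hist S j = card {s \<in> S. wt s = j}"

(* max{H_{n'}(S_h) : h \<in> RL(n,n')}, with the convention e_0 for n = 0 *)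
definition hist_max :: "nat \<Rightarrow> nat \<Rightarrow> nat \<Rightarrow> nat" where
  "hist_max n n' = (if n = 0 then ev 0
     else vmax {act_hist (sigset n n' W b) | W b. True})"

definition in_Gamma :: "(nat \<Rightarrow> nat \<Rightarrow> nat \<Rightarrow> nat) \<Rightarrow> bool" where
  "in_Gamma g \<longleftrightarrow>
     (\<forall>n' n. 1 \<le> n' \<and> n \<le> n' \<longrightarrow> fin_supp (g n n')) \<and>
     (\<forall>n' n. 1 \<le> n' \<and> n \<le> n' \<longrightarrow> vle (hist_max n n') (g n n')) \<and>
     (\<forall>n' n m. 1 \<le> n' \<and> n \<le> m \<and> m \<le> n' \<longrightarrow> vle (g n n') (g m n'))"

definition cl :: "nat \<Rightarrow> (nat \<Rightarrow> nat) \<Rightarrow> nat \<Rightarrow> nat" where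
  "cl i0 v i = (if i < i0 then v i else if i = i0 then tailsum v i0 else 0)"

definition phi :: "(nat \<Rightarrow> nat \<Rightarrow> nat \<Rightarrow> nat) \<Rightarrow> nat \<Rightarrow> (nat \<Rightarrow> nat) \<Rightarrow> nat \<Rightarrow> nat" where
  "phi g n' v j = (\<Sum>n\<in>{n. v n \<noteq> 0}. v n * cl (min n n') (g (min n n') n') j)"

(* multi signature: hs = [h_1,...,h_L] as (W,b) pairs, ns = [n_0,...,n_L] *)
fun msig :: "((nat \<Rightarrow> nat \<Rightarrow> real) \<times> (nat \<Rightarrow> real)) list \<Rightarrow> nat list \<Rightarrow> (nat \<Rightarrow> real) \<Rightarrow> bool list list" where
  "msig ((W, b) # hs) (n # n' # ns) x =
     layer_sig n n' W b x # msig hs (n' # ns) (layer_out n n' W b x)"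
| "msig _ _ x = []"

definition msigset :: "((nat \<Rightarrow> nat \<Rightarrow> real) \<times> (nat \<Rightarrow> real)) list \<Rightarrow> nat list \<Rightarrow> bool list list set" where
  "msigset hs ns = {msig hs ns x | x. True}"

definition msigset_l :: "nat \<Rightarrow> ((nat \<Rightarrow> nat \<Rightarrow> real) \<times> (nat \<Rightarrow> real)) list \<Rightarrow> nat list \<Rightarrow> bool list list set" where
  "msigset_l l hs ns = take l ` msigset hs ns"

definition dim_hist :: "nat \<Rightarrow> bool list list set \<Rightarrow> nat \<Rightarrow> nat" where
  "dim_hist n0 U j = card {u \<in> U. Min (insert n0 (wt ` set u)) = j}"

end

theory Submission
  imports Defs
begin

lemma tailsum_rec:
  assumes "fin_supp v"
  shows "tailsum v J = v J + tailsum v (Suc J)"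
proof -
  have fin: "finite {j. Suc J \<le> j \<and> v j \<noteq> 0}"
    using assms unfolding fin_supp_def by (rule finite_subset[rotated]) auto
  show ?thesis
  proof (cases "v J = 0")
    case True
    have "{j. J \<le> j \<and> v j \<noteq> 0} = {j. Suc J \<le> j \<and> v j \<noteq> 0}"
      using True by (auto simp: le_eq_less_or_eq Suc_le_eq)
    then show ?thesis using True by (simp add: tailsum_def)
  next
    case False
    have "{j. J \<le> j \<and> v j \<noteq> 0} = insert J {j. Suc J \<le> j \<and> v j \<noteq> 0}"
      using False by (auto simp: le_eq_less_or_eq Suc_le_eq)
    then show ?thesis using fin by (simp add: tailsum_def)
  qed
qed

lemma tailsum_zero: "(\<forall>j\<ge>J. v j = 0) \<Longrightarrow> tailsum v J = 0"
  unfolding tailsum_def by (simp add: sum.neutral)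

lemma fin_supp_bound: "(\<forall>j>N. v j = 0) \<Longrightarrow> fin_supp v"
  unfolding fin_supp_def
  by (rule finite_subset[of _ "{..N}"]) (auto simp: not_less[symmetric])

lemma tailsum_card:
  assumes "finite S"
  shows "tailsum (\<lambda>j. card {s\<in>S. k s = j}) J = card {s\<in>S. J \<le> k s}"
proof -
  define T where "T = k ` {s\<in>S. J \<le> k s}"
  have T: "{j. J \<le> j \<and> card {s\<in>S. k s = j} \<noteq> 0} = T"
    using assms by (auto simp: T_def card_eq_0_iff)
  have U: "{s\<in>S. J \<le> k s} = (\<Union>j\<in>T. {s\<in>S. k s = j})"
    by (auto simp: T_def)
  have "card (\<Union>j\<in>T. {s\<in>S. k s = j}) = (\<Sum>j\<in>T. card {s\<in>S. k s = j})"
    by (rule card_UN_disjoint) (use assms in \<open>auto simp: T_def\<close>)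
  then show ?thesis unfolding tailsum_def T U by simp
qed

lemma tailsum_cl:
  assumes "fin_supp v" "J \<le> m"
  shows "tailsum (cl m v) J = tailsum v J"
proof -
  have fs: "fin_supp (cl m v)" by (rule fin_supp_bound[of m]) (simp add: cl_def)
  show ?thesis using assms(2)
  proof (induction J rule: inc_induct)
    case base
    have z: "tailsum (cl m v) (Suc m) = 0" by (rule tailsum_zero) (simp add: cl_def)
    have "cl m v m = tailsum v m" by (simp add: cl_def)
    then show ?case using tailsum_rec[OF fs, of m] z by simp
  next
    case (step i)
    have "cl m v i = v i" using step by (simp add: cl_def)
    then show ?case using step tailsum_rec[OF fs, of i] tailsum_rec[OF assms(1), of i]
      by simp
  qed
qed

lemma tailsum_cl_big:
  assumes "m < J"
  shows "tailsum (cl m v) J = 0"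
  by (rule tailsum_zero) (use assms in \<open>simp add: cl_def\<close>)

lemma tailsum_vmax:
  assumes fin: "finite A" and ne: "A \<noteq> {}" and bd: "\<forall>v\<in>A. \<forall>j>N. v j = 0"
  shows "tailsum (vmax A) J = Max ((\<lambda>v. tailsum v J) ` A)"
proof -
  define M where "M j = Max ((\<lambda>v. tailsum v j) ` A)" for j
  have fsA: "\<forall>v\<in>A. fin_supp v" using bd fin_supp_bound by blast
  have Mz: "M j = 0" if "N < j" for j
  proof -
    have "(\<lambda>v. tailsum v j) ` A = (\<lambda>v. 0) ` A"
      using bd that by (auto intro!: image_cong tailsum_zero)
    also have "\<dots> = {0}" using ne by auto
    finally have "(\<lambda>v. tailsum v j) ` A = {0}" .
    then show ?thesis by (simp add: M_def)
  qed
  have Manti: "M (Suc j) \<le> M j" for j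
    unfolding M_def
  proof (rule Max.boundedI)
    show "finite ((\<lambda>v. tailsum v (Suc j)) ` A)" using fin by simp
    show "(\<lambda>v. tailsum v (Suc j)) ` A \<noteq> {}" using ne by simp
    fix a assume "a \<in> (\<lambda>v. tailsum v (Suc j)) ` A"
    then obtain v where v: "v \<in> A" "a = tailsum v (Suc j)" by auto
    have "a \<le> tailsum v j" using tailsum_rec[of v j] fsA v by simp
    also have "\<dots> \<le> Max ((\<lambda>v. tailsum v j) ` A)" using fin v by simp
    finally show "a \<le> Max ((\<lambda>v. tailsum v j) ` A)" .
  qed
  have vm: "vmax A j = M j - M (Suc j)" for j by (simp add: vmax_def M_def)
  have fs: "fin_supp (vmax A)" by (rule fin_supp_bound[of N]) (simp add: vm Mz)
  have "tailsum (vmax A) J = M J"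
  proof (cases "J \<le> Suc N")
    case True
    then show ?thesis
    proof (induction J rule: inc_induct)
      case base
      show ?case by (rule trans[OF tailsum_zero]) (auto simp: vm Mz)
    next
      case (step i)
      then show ?case using tailsum_rec[OF fs, of i] Manti[of i] vm[of i] by simp
    qed
  next
    case False
    then show ?thesis by (subst tailsum_zero) (auto simp: vm Mz)
  qed
  then show ?thesis by (simp add: M_def)
qed


lemma sigset_sub: "sigset n n' W b \<subseteq> {s. length s = n'}"
  by (auto simp: sigset_def layer_sig_def)

lemma finite_len: "finite {s::bool list. length s = n}"
  using finite_lists_length_eq[of "UNIV::bool set" n] by simp

lemma sigset_fin: "finite (sigset n n' W b)"
  by (rule finite_subset[OF sigset_sub finite_len])

lemma wt_le: "wt s \<le> length s"
  unfolding wt_def by (rule length_filter_le)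

lemma act_hist_bound: "\<forall>j>n'. act_hist (sigset n n' W b) j = 0"
proof (intro allI impI)
  fix j assume "n' < j"
  then have "{s \<in> sigset n n' W b. wt s = j} = {}"
  proof -
    have "wt s \<le> n'" if "s \<in> sigset n n' W b" for s
      using sigset_sub[of n n' W b] wt_le[of s] that by auto
    then show "{s \<in> sigset n n' W b. wt s = j} = {}" using \<open>n' < j\<close> by fastforce
  qed
  then show "act_hist (sigset n n' W b) j = 0" by (metis act_hist_def card.empty)
qed

lemma act_hist_eta: "act_hist S = (\<lambda>j. card {s\<in>S. wt s = j})"
  by (rule ext) (simp add: act_hist_def)

lemma hist_tail:
  assumes "0 < n"
  shows "tailsum (act_hist (sigset n n' W b)) J \<le> tailsum (hist_max n n') J"
proof -
  define A where "A = {act_hist (sigset n n' W b) | W b. True}"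
  have "A \<subseteq> act_hist ` Pow {s. length s = n'}"
  proof
    fix v assume "v \<in> A"
    then obtain W b where "v = act_hist (sigset n n' W b)" unfolding A_def by blast
    moreover have "sigset n n' W b \<in> Pow {s. length s = n'}" using sigset_sub by simp
    ultimately show "v \<in> act_hist ` Pow {s. length s = n'}" by simp
  qed
  then have fin: "finite A"
    by (rule finite_subset) (simp add: finite_len)
  have ne: "A \<noteq> {}" and mem: "act_hist (sigset n n' W b) \<in> A" unfolding A_def by auto
  have bd: "\<forall>v\<in>A. \<forall>j>n'. v j = 0"
  proof (intro ballI)
    fix v assume "v \<in> A"
    then obtain W b where "v = act_hist (sigset n n' W b)" unfolding A_def by blast
    then show "\<forall>j>n'. v j = 0" using act_hist_bound by simp
  qed
  have "hist_max n n' = vmax A" using assms by (simp add: hist_max_def A_def)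
  then have "tailsum (hist_max n n') J = Max ((\<lambda>v. tailsum v J) ` A)"
    using tailsum_vmax[OF fin ne bd] by simp
  moreover have "tailsum (act_hist (sigset n n' W b)) J \<le> Max ((\<lambda>v. tailsum v J) ` A)"
    using fin mem by simp
  ultimately show ?thesis by simp
qed

lemma sigset_full: "{s. length s = n'} \<subseteq> sigset n' n' (\<lambda>i k. if i = k then 1 else 0) (\<lambda>_. 0)"
proof
  fix s :: "bool list" assume "s \<in> {s. length s = n'}"
  then have len: "length s = n'" by simp
  define x :: "nat \<Rightarrow> real" where "x i = (if s ! i then 1 else 0)" for i
  have pre: "pre n' (\<lambda>i k. if i = k then 1 else 0) (\<lambda>_. 0) x i = x i" if "i < n'" for i
  proof -
    have "(\<Sum>k<n'. x k * (if i = k then 1 else 0)) = (\<Sum>k\<in>{i}. x k)"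
      using that by (intro sum.mono_neutral_cong_right) auto
    then show ?thesis by (simp add: pre_def)
  qed
  have "layer_sig n' n' (\<lambda>i k. if i = k then 1 else 0) (\<lambda>_. 0) x = s"
    unfolding layer_sig_def using len
    by (intro nth_equalityI) (auto simp: pre x_def)
  then show "s \<in> sigset n' n' (\<lambda>i k. if i = k then 1 else 0) (\<lambda>_. 0)"
    unfolding sigset_def by blast
qed

theorem mainTheorem3:
  fixes ns :: "nat list"
    and hs :: "((nat \<Rightarrow> nat \<Rightarrow> real) \<times> (nat \<Rightarrow> real)) list"
    and g :: "nat \<Rightarrow> nat \<Rightarrow> nat \<Rightarrow> nat"
  assumes "length hs \<ge> 1"
    and "length ns = length hs + 1"
    and "\<forall>n\<in>set ns. 0 < n"
    and "in_Gamma g"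
  shows "vle (dim_hist (ns ! 0) (msigset_l 1 hs ns)) (phi g (ns ! 1) (ev (ns ! 0)))"
proof -
  obtain W b hs' where hs: "hs = (W, b) # hs'"
    using assms(1) by (cases hs) auto
  obtain n0 n1 ns' where ns: "ns = n0 # n1 # ns'"
    using assms(2) hs by (cases ns; cases "tl ns") auto
  have n0: "0 < n0" and n1: "0 < n1" using assms(3) ns by auto
  define S where "S = sigset n0 n1 W b"
  define m where "m = min n0 n1"
  have finS: "finite S" unfolding S_def by (rule sigset_fin)
  have U: "msigset_l 1 hs ns = (\<lambda>s. [s]) ` S"
  proof -
    have "msigset hs ns = (\<lambda>x. msig hs ns x) ` UNIV"
      unfolding msigset_def by auto
    then have "msigset_l 1 hs ns = (\<lambda>x. take 1 (msig hs ns x)) ` UNIV"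
      unfolding msigset_l_def by (simp add: image_image)
    also have "\<dots> = (\<lambda>x. [layer_sig n0 n1 W b x]) ` UNIV"
      by (simp add: hs ns)
    also have "\<dots> = (\<lambda>s. [s]) ` S"
      unfolding S_def sigset_def by auto
    finally show ?thesis .
  qed
  have dh: "dim_hist n0 (msigset_l 1 hs ns) = (\<lambda>j. card {s\<in>S. min n0 (wt s) = j})"
  proof (rule ext)
    fix j
    have "{u \<in> (\<lambda>s. [s]) ` S. Min (insert n0 (wt ` set u)) = j}
          = (\<lambda>s. [s]) ` {s\<in>S. min n0 (wt s) = j}" by auto
    then show "dim_hist n0 (msigset_l 1 hs ns) j = card {s\<in>S. min n0 (wt s) = j}"
      unfolding dim_hist_def U by (simp add: card_image inj_on_def)
  qed
  have ph: "phi g n1 (ev n0) = cl m (g m n1)"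
  proof (rule ext)
    fix j
    have "{n. ev n0 n \<noteq> 0} = {n0}" by (auto simp: ev_def)
    then show "phi g n1 (ev n0) j = cl m (g m n1) j"
      by (simp add: phi_def ev_def m_def)
  qed
  have G: "in_Gamma g" by (rule assms(4))
  have fsg: "fin_supp (g m n1)" using G n1 unfolding in_Gamma_def m_def by auto
  have hg: "vle (hist_max m n1) (g m n1)" using G n1 unfolding in_Gamma_def m_def by auto
  obtain W' b' where S': "S \<subseteq> sigset m n1 W' b'"
  proof (cases "n0 \<le> n1")
    case True then show ?thesis using that[of W b] by (simp add: S_def m_def)
  next
    case False
    then have "m = n1" by (simp add: m_def)
    have "S \<subseteq> sigset m n1 (\<lambda>i k. if i = k then 1 else 0) (\<lambda>_. 0)"
      unfolding S_def \<open>m = n1\<close> using sigset_sub[of n0 n1 W b] sigset_full[of n1]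
      by (rule subset_trans)
    then show ?thesis by (rule that)
  qed
  have ns0: "ns ! 0 = n0" and ns1: "ns ! 1 = n1" using ns by auto
  have m0: "0 < m" using n0 n1 by (simp add: m_def)
  show ?thesis
    unfolding vle_def
  proof (simp only: ns0 ns1 dh ph, intro allI)
    fix J
    have L: "tailsum (\<lambda>j. card {s\<in>S. min n0 (wt s) = j}) J = card {s\<in>S. J \<le> min n0 (wt s)}"
      by (rule tailsum_card[OF finS])
    show "tailsum (\<lambda>j. card {s\<in>S. min n0 (wt s) = j}) J \<le> tailsum (cl m (g m n1)) J"
    proof (cases "J \<le> m")
      case True
      have "card {s\<in>S. J \<le> min n0 (wt s)} \<le> card {s\<in>sigset m n1 W' b'. J \<le> wt s}"
        by (rule card_mono) (use S' sigset_fin in auto)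
      also have "\<dots> = tailsum (act_hist (sigset m n1 W' b')) J"
        unfolding act_hist_eta by (rule tailsum_card[symmetric, OF sigset_fin])
      also have "\<dots> \<le> tailsum (hist_max m n1) J" by (rule hist_tail[OF m0])
      also have "\<dots> \<le> tailsum (g m n1) J" using hg by (simp add: vle_def)
      also have "\<dots> = tailsum (cl m (g m n1)) J" using tailsum_cl[OF fsg True] by simp
      finally show ?thesis using L by simp
    next
      case False
      have "{s\<in>S. J \<le> min n0 (wt s)} = {}"
      proof -
        have "min n0 (wt s) \<le> m" if "s \<in> S" for s
          using sigset_sub[of n0 n1 W b] wt_le[of s] that unfolding S_def m_def by auto
        then show "{s\<in>S. J \<le> min n0 (wt s)} = {}" using False by fastforce
      qed
      then show ?thesis using L by (metis card.empty le0)
    qed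
  qed
qed

end
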